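(* Let $\sigma>0$, $r\in\mathbb{R}$, $A>0$ and $B>0$, and consider the system of ODEs \[ \dot{x}_d = X,\quad \dot{X}=\sigma\big(Y-X+A\sin(Bx_d)\big),\quad \dot{Y}=-XZ+rX-Y,\quad \dot{Z}=XY-Z . \] Let $k$ be an odd integer and consider the equilibrium $(x_d,X,Y,Z)=(k\pi/B,0,0,0)$. The eigenvalues of the Jacobian at this equilibrium are $-1$ together with the roots of the cubic $\lambda^3+(\sigma+1)\lambda^2+\sigma(1-r+AB)\lambda+AB\sigma$. Define \[ r_c = 1+AB\,\frac{\sigma}{\sigma+1}. \] Then: (i) if all roots of the cubic are real, they are all negative when $r<1+AB$, while when $r>1+AB$ two of them are positive; (ii) if the cubic has a pair of non-real complex conjugate roots, then its remaining real root is negative, and the complex conjugate pair has negative real part when $r<r_c$ and positive real part when $r>r_c$; (iii) at $r=r_c$ the cubic has a pair of purely imaginary roots $\pm i\omega$ with $\omega^2 = AB\,\sigma/(\sigma+1)$.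
   Context: The system models a one-dimensional wave-particle entity (a walking droplet) in the sinusoidal potential $U(x)=(A/B)\cos(Bx)$: $x_d$ is the particle position, $X$ its velocity, and $Y,Z$ are wave-memory variables. The equilibria with odd $k$ correspond to the particle sitting at the minima of the potential. *)

theory Defs
  imports "HOL-Analysis.Analysis" "HOL-Computational_Algebra.Polynomial"
begin

text \<open>State vector (x_d, X, Y, Z) = (v$1, v$2, v$3, v$4) in real^4.\<close>
definition droplet_field :: "real \<Rightarrow> real \<Rightarrow> real \<Rightarrow> real \<Rightarrow> real^4 \<Rightarrow> real^4" where
  "droplet_field \<sigma> r A B v =
     vector [v$2,
             \<sigma> * (v$3 - v$2 + A * sin (B * v$1)),
             - (v$2 * v$4) + r * v$2 - v$3,
             v$2 * v$3 - v$4]"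

definition droplet_cubic :: "real \<Rightarrow> real \<Rightarrow> real \<Rightarrow> real \<Rightarrow> real poly" where
  "droplet_cubic \<sigma> r A B = [: A * B * \<sigma>, \<sigma> * (1 - r + A * B), \<sigma> + 1, 1 :]"

definition r_crit :: "real \<Rightarrow> real \<Rightarrow> real \<Rightarrow> real" where
  "r_crit \<sigma> A B = 1 + A * B * (\<sigma> / (\<sigma> + 1))"

end

theory Submission imports Defs "HOL-Computational_Algebra.Fundamental_Theorem_Algebra" begin

lemma nonreal_root:
  fixes a2 a1 a0 :: real and z :: complex
  assumes "z^3 + of_real a2 * z^2 + of_real a1 * z + of_real a0 = 0" "Im z \<noteq> 0"
  shows "a1 = (Im z)^2 - 3*(Re z)^2 - 2*a2*Re z \<and> a0 = (a2 + 2*Re z)*((Re z)^2 + (Im z)^2)"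
proof -
  obtain u v where z: "z = Complex u v" by (cases z)
  have v: "v \<noteq> 0" using assms(2) z by simp
  have "Re (z^3 + of_real a2 * z^2 + of_real a1 * z + of_real a0) = 0"
       "Im (z^3 + of_real a2 * z^2 + of_real a1 * z + of_real a0) = 0" using assms(1) by simp_all
  then have e1: "u^3 - 3*u* v^2 + a2*(u^2-v^2) + a1*u + a0 = 0"
        and e2: "v * (3*u^2 - v^2 + 2*a2*u + a1) = 0"
    by (simp_all add: z power3_eq_cube power2_eq_square algebra_simps)
  have e2': "a1 = v^2 - 3*u^2 - 2*a2*u" using e2 v by simp
  have "a0 = (a2 + 2*u)*(u^2 + v^2)" using e1 unfolding e2' by (simp add: algebra_simps power3_eq_cube power2_eq_square)
  then show ?thesis using e2' z by simp
qed

lemma signs3: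
  fixes a b c :: real
  assumes "a*b*c < 0" "a*b + b*c + c*a < 0"
  shows "(a>0 \<and> b>0 \<and> c\<le>0) \<or> (a>0 \<and> c>0 \<and> b\<le>0) \<or> (b>0 \<and> c>0 \<and> a\<le>0)"
proof -
  have "a \<noteq> 0" "b \<noteq> 0" "c \<noteq> 0" using assms(1) by auto
  then show ?thesis using assms
    by (smt (verit) mult_neg_neg mult_pos_pos mult_pos_neg mult_neg_pos mult_less_0_iff)
qed



lemma vector_4 [simp]:
 "(vector [x,y,z,w] ::('a::zero)^4)$1 = x"
 "(vector [x,y,z,w] ::('a::zero)^4)$2 = y"
 "(vector [x,y,z,w] ::('a::zero)^4)$3 = z"
 "(vector [x,y,z,w] ::('a::zero)^4)$4 = w"
  unfolding vector_def by simp_all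

lemma hd_vec_nth [derivative_intros]:
  "(f has_derivative f') F \<Longrightarrow> ((\<lambda>x. f x $ i) has_derivative (\<lambda>h. f' h $ i)) F"
  using bounded_linear.has_derivative[OF bounded_linear_vec_nth] by blast

lemma field_zero:
  fixes k :: int assumes "B > 0"
  shows "droplet_field \<sigma> r A B (vector [k * pi / B, 0, 0, 0]) = 0"
proof -
  have "B * (k * pi / B) = pi * k" using assms by simp
  then show ?thesis unfolding droplet_field_def
    by (simp add: vec_eq_iff forall_4)
qed

lemma field_deriv:
  fixes k :: int and \<sigma> r A B :: real assumes "B > 0" "odd k"
  defines "J \<equiv> vector [vector[0,1,0,0], vector[-\<sigma>*A*B, -\<sigma>, \<sigma>, 0], vector[0,r,-1,0], vector[0,0,0,-1]] :: real^4^4"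
  shows "(droplet_field \<sigma> r A B has_derivative (\<lambda>h. J *v h)) (at (vector [k * pi / B, 0, 0, 0]))"
proof -
  let ?P = "vector [k * pi / B, 0, 0, 0] :: real^4"
  have c: "cos (B * (k * pi / B)) = -1" using assms by (simp add: mult.commute)
  have "\<forall>i\<in>Basis. ((\<lambda>x. droplet_field \<sigma> r A B x \<bullet> i) has_derivative (\<lambda>h. (J *v h) \<bullet> i)) (at ?P within UNIV)"
  proof
    fix b :: "real^4" assume "b \<in> Basis"
    then obtain i where b: "b = axis i 1" by (auto simp: Basis_vec_def)
    have "((\<lambda>x. droplet_field \<sigma> r A B x $ i) has_derivative (\<lambda>h. (J *v h) $ i)) (at ?P)"
    proof -
      consider "i = 1" | "i = 2" | "i = 3" | "i = 4" using exhaust_4 by blast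
      then show ?thesis
      proof cases
        case 1 show ?thesis unfolding droplet_field_def 1 vector_4
          by (rule has_derivative_eq_rhs, (auto intro!: derivative_eq_intros)[1])
             (auto simp: J_def matrix_vector_mult_def sum_4)
      next
        case 2 show ?thesis unfolding droplet_field_def 2 vector_4
          by (rule has_derivative_eq_rhs, (auto intro!: derivative_eq_intros)[1])
             (auto simp: J_def matrix_vector_mult_def sum_4 c assms algebra_simps)
      next
        case 3 show ?thesis unfolding droplet_field_def 3 vector_4
          by (rule has_derivative_eq_rhs, (auto intro!: derivative_eq_intros)[1])
             (auto simp: J_def matrix_vector_mult_def sum_4 algebra_simps)
      next
        case 4 show ?thesis unfolding droplet_field_def 4 vector_4
          by (rule has_derivative_eq_rhs, (auto intro!: derivative_eq_intros)[1])
             (auto simp: J_def matrix_vector_mult_def sum_4 algebra_simps)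
      qed
    qed
    then show "((\<lambda>x. droplet_field \<sigma> r A B x \<bullet> b) has_derivative (\<lambda>h. (J *v h) \<bullet> b)) (at ?P within UNIV)"
      by (simp add: b inner_axis)
  qed
  then show ?thesis using has_derivative_componentwise_within[of "droplet_field \<sigma> r A B" "\<lambda>h. J *v h" ?P UNIV] by simp
qed

lemma det_4':
  "det (A::'a::comm_ring_1^4^4) =
   A$1$1*A$2$2*A$3$3*A$4$4 - A$1$1*A$2$2*A$3$4*A$4$3 - A$1$1*A$2$3*A$3$2*A$4$4
 + A$1$1*A$2$3*A$3$4*A$4$2 + A$1$1*A$2$4*A$3$2*A$4$3 - A$1$1*A$2$4*A$3$3*A$4$2
 - A$1$2*A$2$1*A$3$3*A$4$4 + A$1$2*A$2$1*A$3$4*A$4$3 + A$1$2*A$2$3*A$3$1*A$4$4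
 - A$1$2*A$2$3*A$3$4*A$4$1 - A$1$2*A$2$4*A$3$1*A$4$3 + A$1$2*A$2$4*A$3$3*A$4$1
 + A$1$3*A$2$1*A$3$2*A$4$4 - A$1$3*A$2$1*A$3$4*A$4$2 - A$1$3*A$2$2*A$3$1*A$4$4
 + A$1$3*A$2$2*A$3$4*A$4$1 + A$1$3*A$2$4*A$3$1*A$4$2 - A$1$3*A$2$4*A$3$2*A$4$1
 - A$1$4*A$2$1*A$3$2*A$4$3 + A$1$4*A$2$1*A$3$3*A$4$2 + A$1$4*A$2$2*A$3$1*A$4$3
 - A$1$4*A$2$2*A$3$3*A$4$1 - A$1$4*A$2$3*A$3$1*A$4$2 + A$1$4*A$2$3*A$3$2*A$4$1"
proof -
  have f1: "finite {2::4, 3, 4}" "1 \<notin> {2::4, 3, 4}" by auto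
  have f2: "finite {3::4, 4}" "2 \<notin> {3::4, 4}" by auto
  have f3: "finite {4::4}" "3 \<notin> {4::4}" by auto
  show ?thesis
    unfolding det_def UNIV_4
    unfolding sum_over_permutations_insert[OF f1]
    unfolding sum_over_permutations_insert[OF f2]
    unfolding sum_over_permutations_insert[OF f3]
    unfolding permutes_sing
    by (simp add: sign_swap_id permutation_swap_id sign_compose permutation_compose swap_id_eq algebra_simps)
qed

lemma det_J:
  fixes \<sigma> r A B x :: real
  defines "J \<equiv> vector [vector[0,1,0,0], vector[-\<sigma>*A*B, -\<sigma>, \<sigma>, 0], vector[0,r,-1,0], vector[0,0,0,-1]] :: real^4^4"
  shows "det (mat x - J) = (x + 1) * poly (droplet_cubic \<sigma> r A B) x"
  unfolding det_4' J_def droplet_cubic_def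
  by (simp add: mat_def algebra_simps power3_eq_cube power2_eq_square)

lemma poly_p: "poly (droplet_cubic \<sigma> r A B) x = x^3 + (\<sigma>+1)*x^2 + \<sigma>*(1-r+A*B)*x + A*B*\<sigma>"
  unfolding droplet_cubic_def by (simp add: algebra_simps power3_eq_cube power2_eq_square)

lemma poly_pc: "poly (map_poly complex_of_real (droplet_cubic \<sigma> r A B)) z =
   z^3 + of_real (\<sigma>+1)*z^2 + of_real (\<sigma>*(1-r+A*B))*z + of_real (A*B*\<sigma>)"
  unfolding droplet_cubic_def by (simp add: map_poly_pCons algebra_simps power3_eq_cube power2_eq_square)


theorem mainTheorem2:
  fixes \<sigma> r A B :: real and k :: int
  defines "p \<equiv> droplet_cubic \<sigma> r A B"
      and "pc \<equiv> map_poly complex_of_real (droplet_cubic \<sigma> r A B)"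
  assumes "\<sigma> > 0" and "A > 0" and "B > 0" and "odd k"
  shows
    "droplet_field \<sigma> r A B (vector [k * pi / B, 0, 0, 0]) = 0
     \<and> (\<exists>J :: real^4^4.
          (droplet_field \<sigma> r A B has_derivative (\<lambda>h. J *v h)) (at (vector [k * pi / B, 0, 0, 0]))
          \<and> (\<forall>x::real. det (mat x - J) = (x + 1) * poly p x))
     \<and> ((\<forall>z. poly pc z = 0 \<longrightarrow> Im z = 0) \<longrightarrow>
          (r < 1 + A * B \<longrightarrow> (\<forall>z. poly pc z = 0 \<longrightarrow> Re z < 0))
        \<and> (r > 1 + A * B \<longrightarrow>
             (\<exists>a b c::real. p = [:-a, 1:] * [:-b, 1:] * [:-c, 1:] \<and> a > 0 \<and> b > 0 \<and> c \<le> 0)))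
     \<and> ((\<exists>z. poly pc z = 0 \<and> Im z \<noteq> 0) \<longrightarrow>
          (\<forall>x::real. poly p x = 0 \<longrightarrow> x < 0)
        \<and> (r < r_crit \<sigma> A B \<longrightarrow> (\<forall>z. poly pc z = 0 \<and> Im z \<noteq> 0 \<longrightarrow> Re z < 0))
        \<and> (r > r_crit \<sigma> A B \<longrightarrow> (\<forall>z. poly pc z = 0 \<and> Im z \<noteq> 0 \<longrightarrow> Re z > 0)))
     \<and> (r = r_crit \<sigma> A B \<longrightarrow>
          (\<exists>\<omega>::real. \<omega>\<^sup>2 = A * B * \<sigma> / (\<sigma> + 1)
             \<and> poly pc (\<i> * complex_of_real \<omega>) = 0 \<and> poly pc (- \<i> * complex_of_real \<omega>) = 0))"
  proof -
  define a2 where "a2 = \<sigma> + 1"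
  define a1 where "a1 = \<sigma>*(1-r+A*B)"
  define a0 where "a0 = A*B*\<sigma>"
  have pp: "\<And>x. poly p x = x^3 + a2*x^2 + a1*x + a0"
    unfolding p_def a2_def a1_def a0_def poly_p by simp
  have pcc: "\<And>z. poly pc z = z^3 + of_real a2 * z^2 + of_real a1 * z + of_real a0"
    unfolding pc_def a2_def a1_def a0_def poly_pc by simp
  have a0pos: "a0 > 0" unfolding a0_def using assms by simp
  have a2pos: "a2 > 0" unfolding a2_def using assms by simp
  have key: "a2*a1 - a0 = \<sigma>*(\<sigma>+1)*(r_crit \<sigma> A B - r)"
    unfolding a2_def a1_def a0_def r_crit_def using assms by (simp add: field_simps)
  have pc_real: "\<And>x. poly pc (complex_of_real x) = complex_of_real (poly p x)"
    by (simp add: pp pcc)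
  have P1: "droplet_field \<sigma> r A B (vector [k * pi / B, 0, 0, 0]) = 0"
    using field_zero assms by blast
  have P2: "\<exists>J :: real^4^4.
          (droplet_field \<sigma> r A B has_derivative (\<lambda>h. J *v h)) (at (vector [k * pi / B, 0, 0, 0]))
          \<and> (\<forall>x::real. det (mat x - J) = (x + 1) * poly p x)"
    using field_deriv[OF \<open>B > 0\<close> \<open>odd k\<close>, of \<sigma> r A] det_J unfolding p_def by blast
  have P3: "(\<forall>z. poly pc z = 0 \<longrightarrow> Im z = 0) \<longrightarrow>
          (r < 1 + A * B \<longrightarrow> (\<forall>z. poly pc z = 0 \<longrightarrow> Re z < 0))
        \<and> (r > 1 + A * B \<longrightarrow>
             (\<exists>a b c::real. p = [:-a, 1:] * [:-b, 1:] * [:-c, 1:] \<and> a > 0 \<and> b > 0 \<and> c \<le> 0))"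
  proof (intro impI conjI allI)
    assume allreal: "\<forall>z. poly pc z = 0 \<longrightarrow> Im z = 0"
    {
      assume "r < 1 + A * B"
      then have a1pos: "a1 > 0" unfolding a1_def using assms by simp
      fix z assume z: "poly pc z = 0"
      then have "Im z = 0" using allreal by blast
      then have zr: "z = complex_of_real (Re z)" by (simp add: complex_eq_iff)
      have px: "poly p (Re z) = 0" using z pc_real[of "Re z"] zr by simp
      show "Re z < 0"
      proof (rule ccontr)
        assume "\<not> Re z < 0"
        then have x: "Re z \<ge> 0" by simp
        have "Re z ^ 3 \<ge> 0" "a2 * Re z ^ 2 \<ge> 0" "a1 * Re z \<ge> 0" using x a2pos a1pos by simp_all
        then show False using px pp[of "Re z"] a0pos by linarith
      qed
    }
    {
      assume "r > 1 + A * B"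
      then have a1neg: "a1 < 0" unfolding a1_def using assms by (simp add: mult_pos_neg)
      have c3: "coeff pc 3 = 1" unfolding pc_def droplet_cubic_def
        by (simp add: coeff_map_poly numeral_3_eq_3)
      have "\<not> (\<exists>a l. a \<noteq> 0 \<and> l = 0 \<and> pc = pCons a l)"
      proof
        assume "\<exists>a l. a \<noteq> 0 \<and> l = 0 \<and> pc = pCons a l"
        then obtain a where "pc = pCons a 0" by blast
        then have "coeff pc 3 = 0" by (simp add: numeral_3_eq_3)
        then show False using c3 by simp
      qed
      then obtain z1 where z1: "poly pc z1 = 0" using fundamental_theorem_of_algebra_alt by blast
      define a where "a = Re z1"
      have "Im z1 = 0" using allreal z1 by blast
      then have "z1 = complex_of_real a" by (simp add: complex_eq_iff a_def)
      then have pa: "poly p a = 0" using z1 pc_real[of a] by simp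
      define ss where "ss = a2 + a"
      define q0 where "q0 = a1 + a* ss"
      have a0e: "a0 = -(a^3 + a2*a^2 + a1*a)" using pa pp[of a] by simp
      have fact_r: "\<And>t. poly p t = (t - a)*(t^2 + ss*t + q0)"
        unfolding pp a0e ss_def q0_def by (simp add: algebra_simps power3_eq_cube power2_eq_square)
      have fact_c: "\<And>w. poly pc w = (w - of_real a)*(w^2 + of_real ss*w + of_real q0)"
        unfolding pcc a0e ss_def q0_def by (simp add: algebra_simps power3_eq_cube power2_eq_square)
      define D where "D = ss^2 - 4*q0"
      have Dnn: "D \<ge> 0"
      proof (rule ccontr)
        assume "\<not> D \<ge> 0"
        then have Dn: "D < 0" by simp
        define w where "w = Complex (-ss/2) (sqrt (-D)/2)"
        have sq: "sqrt (-D) * sqrt (-D) = -D" using Dn by simp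
        have "w^2 + of_real ss*w + of_real q0 = 0"
          unfolding w_def using sq by (simp add: complex_eq_iff power2_eq_square D_def algebra_simps) (simp add: field_simps)
        then have "poly pc w = 0" using fact_c by simp
        moreover have "Im w \<noteq> 0" unfolding w_def using Dn by simp
        ultimately show False using allreal by blast
      qed
      define b where "b = (-ss + sqrt D)/2"
      define c where "c = (-ss - sqrt D)/2"
      have sqD: "sqrt D * sqrt D = D" using Dnn by simp
      have bc1: "b + c = -ss" unfolding b_def c_def by (simp add: field_simps)
      have "b*c = (ss * ss - sqrt D * sqrt D)/4" unfolding b_def c_def by (simp add: field_simps)
      also have "\<dots> = q0" using sqD by (simp add: D_def power2_eq_square)
      finally have bc: "b + c = -ss" "b*c = q0" using bc1 by auto
      have quad: "t^2 + ss * t + q0 = (t - b)*(t - c)" for t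
      proof -
        have "(t - b)*(t - c) = t^2 - (b+c)*t + b*c" by (simp add: algebra_simps power2_eq_square)
        then show ?thesis using bc by simp
      qed
      have peq: "p = [:-a, 1:] * [:-b, 1:] * [:-c, 1:]"
      proof (rule poly_ext)
        fix x
        have "poly p x = (x - a)*((x - b)*(x - c))" using fact_r[of x] quad[of x] by simp
        then show "poly p x = poly ([:-a, 1:] * [:-b, 1:] * [:-c, 1:]) x" by (simp add: algebra_simps)
      qed
      have prod: "a*b*c < 0"
      proof -
        have "a*b*c = a*q0" using bc by (simp add: mult.assoc)
        also have "\<dots> = -a0" unfolding a0e q0_def ss_def by (simp add: algebra_simps power3_eq_cube power2_eq_square)
        finally show ?thesis using a0pos by simp
      qed
      have pair: "a*b + b*c + c*a < 0"
      proof -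
        have "a*b + b*c + c*a = a*(b+c) + b*c" by (simp add: algebra_simps)
        also have "\<dots> = a1" unfolding bc q0_def ss_def by (simp add: algebra_simps)
        finally show ?thesis using a1neg by simp
      qed
      show "\<exists>a b c::real. p = [:-a, 1:] * [:-b, 1:] * [:-c, 1:] \<and> a > 0 \<and> b > 0 \<and> c \<le> 0"
        using signs3[OF prod pair]
      proof (elim disjE)
        assume "0 < a \<and> 0 < b \<and> c \<le> 0" then show ?thesis using peq by blast
      next
        assume h: "0 < a \<and> 0 < c \<and> b \<le> 0"
        have "p = [:-a, 1:] * [:-c, 1:] * [:-b, 1:]" using peq by (metis mult.assoc mult.commute)
        then show ?thesis using h by blast
      next
        assume h: "0 < b \<and> 0 < c \<and> a \<le> 0"
        have "p = [:-b, 1:] * [:-c, 1:] * [:-a, 1:]" using peq by (metis mult.assoc mult.commute)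
        then show ?thesis using h by blast
      qed
    }
  qed
  have NR: "a2*a1 - a0 = -2*Re z*((-a2 - Re z)^2 + (Im z)^2)
       \<and> (\<forall>x. poly p x = (x - (-a2 - 2*Re z))*((x - Re z)^2 + (Im z)^2))
       \<and> a0 = -(-a2 - 2*Re z)*((Re z)^2 + (Im z)^2)"
    if "poly pc z = 0" "Im z \<noteq> 0" for z
  proof -
    have e: "a1 = (Im z)^2 - 3*(Re z)^2 - 2*a2*Re z \<and> a0 = (a2 + 2*Re z)*((Re z)^2 + (Im z)^2)"
      using nonreal_root[of z a2 a1 a0] that pcc by simp
    then have e1: "a1 = (Im z)^2 - 3*(Re z)^2 - 2*a2*Re z" and e0: "a0 = (a2 + 2*Re z)*((Re z)^2 + (Im z)^2)"
      by auto
    show ?thesis unfolding pp e1 e0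
      by (simp add: algebra_simps power3_eq_cube power2_eq_square)
  qed
  have P4: "(\<exists>z. poly pc z = 0 \<and> Im z \<noteq> 0) \<longrightarrow>
          (\<forall>x::real. poly p x = 0 \<longrightarrow> x < 0)
        \<and> (r < r_crit \<sigma> A B \<longrightarrow> (\<forall>z. poly pc z = 0 \<and> Im z \<noteq> 0 \<longrightarrow> Re z < 0))
        \<and> (r > r_crit \<sigma> A B \<longrightarrow> (\<forall>z. poly pc z = 0 \<and> Im z \<noteq> 0 \<longrightarrow> Re z > 0))"
  proof (intro impI conjI allI)
    assume "\<exists>z. poly pc z = 0 \<and> Im z \<noteq> 0"
    then obtain z where z: "poly pc z = 0" "Im z \<noteq> 0" by blast
    note N = NR[OF z]
    have pos: "(Re z)^2 + (Im z)^2 > 0" using z(2) by (simp add: add_nonneg_pos)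
    have x0: "-a2 - 2*Re z < 0"
    proof (rule ccontr)
      assume "\<not> -a2 - 2*Re z < 0"
      then have "-(-a2 - 2*Re z) \<le> 0" by simp
      then have "-(-a2 - 2*Re z)*((Re z)^2 + (Im z)^2) \<le> 0" using pos
        by (meson less_imp_le mult_nonpos_nonneg)
      then show False using N a0pos by linarith
    qed
    fix x assume "poly p x = 0"
    then have "(x - (-a2 - 2*Re z))*((x - Re z)^2 + (Im z)^2) = 0" using N by simp
    moreover have "(x - Re z)^2 + (Im z)^2 > 0" using z(2) by (simp add: add_nonneg_pos)
    ultimately have "x = -a2 - 2*Re z" using z(2) by simp
    then show "x < 0" using x0 by simp
  next
    fix w assume "r < r_crit \<sigma> A B" and w: "poly pc w = 0 \<and> Im w \<noteq> 0"
    then have "a2*a1 - a0 > 0" using key assms by simp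
    moreover have "(-a2 - Re w)^2 + (Im w)^2 > 0" using w by (simp add: add_nonneg_pos)
    ultimately have "-2*Re w*((-a2 - Re w)^2 + (Im w)^2) > 0" "(-a2 - Re w)^2 + (Im w)^2 > 0"
      using NR[of w] w by auto
    then show "Re w < 0" by (simp add: zero_less_mult_iff mult_less_0_iff)
  next
    fix w assume "r > r_crit \<sigma> A B" and w: "poly pc w = 0 \<and> Im w \<noteq> 0"
    then have "a2*a1 - a0 < 0" using key assms by (simp add: mult_pos_neg)
    moreover have "(-a2 - Re w)^2 + (Im w)^2 > 0" using w by (simp add: add_nonneg_pos)
    ultimately have "-2*Re w*((-a2 - Re w)^2 + (Im w)^2) < 0" "(-a2 - Re w)^2 + (Im w)^2 > 0"
      using NR[of w] w by auto
    then show "Re w > 0" by (simp add: zero_less_mult_iff mult_less_0_iff)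
  qed
  have P5: "r = r_crit \<sigma> A B \<longrightarrow>
          (\<exists>\<omega>::real. \<omega>\<^sup>2 = A * B * \<sigma> / (\<sigma> + 1)
             \<and> poly pc (\<i> * complex_of_real \<omega>) = 0 \<and> poly pc (- \<i> * complex_of_real \<omega>) = 0)"
  proof
    assume rc: "r = r_crit \<sigma> A B"
    have a1e: "a1 = A * B * \<sigma> / (\<sigma> + 1)" unfolding a1_def rc r_crit_def using assms
      by (simp add: field_simps)
    have a1pos: "a1 > 0" unfolding a1e using assms by simp
    have a0e: "a0 = a2*a1" using key rc by simp
    define \<omega> where "\<omega> = sqrt a1"
    have w2: "\<omega>^2 = a1" unfolding \<omega>_def using a1pos by simp
    have fac: "\<And>w. poly pc w = (w^2 + of_real a1)*(w + of_real a2)"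
      unfolding pcc a0e by (simp add: algebra_simps power3_eq_cube power2_eq_square)
    have sq1: "(\<i> * complex_of_real \<omega>)^2 = - of_real a1"
      by (simp add: power_mult_distrib w2[symmetric])
    have sq2: "(- \<i> * complex_of_real \<omega>)^2 = - of_real a1"
      by (simp add: power_mult_distrib w2[symmetric])
    show "\<exists>\<omega>::real. \<omega>\<^sup>2 = A * B * \<sigma> / (\<sigma> + 1)
             \<and> poly pc (\<i> * complex_of_real \<omega>) = 0 \<and> poly pc (- \<i> * complex_of_real \<omega>) = 0"
      using w2 a1e fac sq1 sq2 by auto
  qed
  show ?thesis using P1 P2 P3 P4 P5 by blast
qed

end
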